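(* Let $\mathcal A_1,\mathcal B_1:U_1\to V_1$ be linear maps of finite-dimensional vector spaces over a field $\mathbb F$ with $\mathcal B_1$ surjective. Let $U_2=\mathcal B_1^{-1}(\operatorname{im}\mathcal A_1)$, $V_2=\operatorname{im}\mathcal A_1$, and let $\mathcal A_2,\mathcal B_2:U_2\to V_2$ be the restrictions of $\mathcal A_1,\mathcal B_1$; similarly let $V_3=\operatorname{im}\mathcal A_2$. Let $(A_1,B_1)$ and $(A_2,B_2)$ be the matrix pairs of $(\mathcal A_1,\mathcal B_1)$ and $(\mathcal A_2,\mathcal B_2)$ in arbitrary bases, and take any regularizing decomposition of $(A_1,B_1)$. Then a regularizing decomposition of $(A_2,B_2)$ is obtained from it by deleting all summands $(J_1(0),I_1)=([0],[1])$, replacing each summand $(J_k(0),I_k)$ with $k\ge2$ by $(J_{k-1}(0),I_{k-1})$, and leaving all other summands unchanged. The number of summands $(J_1(0),I_1)$ in the decomposition of $(A_1,B_1)$ equals $\dim V_1-2\dim V_2+\dim V_3$.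
   Context: $J_k(0)$ denotes the $k\times k$ nilpotent Jordan block with ones directly below the diagonal. $L_k$ and $R_k$ are the $(k-1)\times k$ matrices obtained from $I_k$ by deleting its last row, respectively its first row. Direct sums of matrix pairs are blockwise. Two matrix pairs $(A,B)$, $(A',B')$ are equivalent if $SA=A'R$, $SB=B'R$ for nonsingular $S,R$. A regularizing decomposition of a matrix pair $(A,B)$ is a direct sum $(I_r,D)\oplus(M_1,N_1)\oplus\dots\oplus(M_t,N_t)$ equivalent to $(A,B)$, in which $D$ is $r\times r$ nonsingular and each $(M_i,N_i)$ is one of $(I_k,J_k(0))$, $(J_k(0),I_k)$, $(L_k,R_k)$, $(L_k^T,R_k^T)$, $k\ge1$. *)

theory Defs
  imports Main "Jordan_Normal_Form.VS_Connect"
begin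

definition jblock :: "nat \<Rightarrow> 'a::field mat" where
  "jblock k = mat k k (\<lambda>(i,j). if i = Suc j then 1 else 0)"

definition Lmat :: "nat \<Rightarrow> 'a::field mat" where
  "Lmat k = mat (k - 1) k (\<lambda>(i,j). if i = j then 1 else 0)"

definition Rmat :: "nat \<Rightarrow> 'a::field mat" where
  "Rmat k = mat (k - 1) k (\<lambda>(i,j). if j = Suc i then 1 else 0)"

datatype summand =
    IJ nat
  | JI nat
  | LR nat
  | LRT nat

fun summand_size :: "summand \<Rightarrow> nat" where
  "summand_size (IJ k) = k"
| "summand_size (JI k) = k"
| "summand_size (LR k) = k"
| "summand_size (LRT k) = k"

fun summand_pair :: "summand \<Rightarrow> 'a::field mat \<times> 'a mat" where
  "summand_pair (IJ k) = (1\<^sub>m k, jblock k)"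
| "summand_pair (JI k) = (jblock k, 1\<^sub>m k)"
| "summand_pair (LR k) = (Lmat k, Rmat k)"
| "summand_pair (LRT k) = (transpose_mat (Lmat k), transpose_mat (Rmat k))"

definition diag_sum :: "'a::field mat \<Rightarrow> 'a mat \<Rightarrow> 'a mat" where
  "diag_sum X Y = four_block_mat X (0\<^sub>m (dim_row X) (dim_col Y)) (0\<^sub>m (dim_row Y) (dim_col X)) Y"

definition pair_sum :: "'a::field mat \<times> 'a mat \<Rightarrow> 'a mat \<times> 'a mat \<Rightarrow> 'a mat \<times> 'a mat" where
  "pair_sum p q = (diag_sum (fst p) (fst q), diag_sum (snd p) (snd q))"

definition decomp_pair :: "'a::field mat \<Rightarrow> summand list \<Rightarrow> 'a mat \<times> 'a mat" where
  "decomp_pair D ss = foldl pair_sum (1\<^sub>m (dim_row D), D) (map summand_pair ss)"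

definition pair_equiv :: "'a::field mat \<times> 'a mat \<Rightarrow> 'a mat \<times> 'a mat \<Rightarrow> bool" where
  "pair_equiv p q \<longleftrightarrow>
     (let m = dim_row (fst p); n = dim_col (fst p) in
       fst p \<in> carrier_mat m n \<and> snd p \<in> carrier_mat m n \<and>
       fst q \<in> carrier_mat m n \<and> snd q \<in> carrier_mat m n \<and>
       (\<exists>S R. S \<in> carrier_mat m m \<and> R \<in> carrier_mat n n \<and>
              invertible_mat S \<and> invertible_mat R \<and>
              S * fst p = fst q * R \<and> S * snd p = snd q * R))"

definition regularizing_decomp :: "'a::field mat \<Rightarrow> 'a mat \<Rightarrow> 'a mat \<Rightarrow> summand list \<Rightarrow> bool" where
  "regularizing_decomp A B D ss \<longleftrightarrow>
     D \<in> carrier_mat (dim_row D) (dim_row D) \<and> invertible_mat D \<and>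
     (\<forall>s \<in> set ss. summand_size s \<ge> 1) \<and>
     pair_equiv (A, B) (decomp_pair D ss)"

fun shift_summand :: "summand \<Rightarrow> summand list" where
  "shift_summand (JI k) = (if k \<le> 1 then [] else [JI (k - 1)])"
| "shift_summand s = [s]"

definition shift_decomp :: "summand list \<Rightarrow> summand list" where
  "shift_decomp ss = concat (map shift_summand ss)"

definition basis_mat :: "nat \<Rightarrow> 'a::field mat \<Rightarrow> 'a vec set \<Rightarrow> bool" where
  "basis_mat n P W \<longleftrightarrow>
     P \<in> carrier_mat n (dim_col P) \<and>
     (\<forall>y \<in> carrier_vec (dim_col P). P *\<^sub>v y = 0\<^sub>v n \<longrightarrow> y = 0\<^sub>v (dim_col P)) \<and>
     W = (\<lambda>y. P *\<^sub>v y) ` carrier_vec (dim_col P)"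

(* M is the matrix of the map x \<mapsto> A x, restricted to the space with basis (columns of) P,
   into the space with basis (columns of) Q *)
definition mat_wrt :: "'a::field mat \<Rightarrow> 'a mat \<Rightarrow> 'a mat \<Rightarrow> 'a mat \<Rightarrow> bool" where
  "mat_wrt A P Q M \<longleftrightarrow> M \<in> carrier_mat (dim_col Q) (dim_col P) \<and> Q * M = A * P"

definition subspace_dim :: "nat \<Rightarrow> 'a::field vec set \<Rightarrow> nat" where
  "subspace_dim n W = vectorspace.dim class_ring ((module_vec TYPE('a) n)\<lparr>carrier := W\<rparr>)"

end

theory Submission imports Defs "Jordan_Normal_Form.DL_Rank" begin


lemma mult_unit_col: assumes "(P :: 'a :: field mat) \<in> carrier_mat n k" "i < k"
  shows "P *\<^sub>v unit_vec k i = col P i"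
proof (rule eq_vecI)
  fix r assume "r < dim_vec (col P i)"
  hence r: "r < n" using assms by auto
  have "(P *\<^sub>v unit_vec k i) $ r = row P r \<bullet> unit_vec k i" using r assms by auto
  also have "\<dots> = row P r $ i" by (rule scalar_prod_right_unit[OF assms(2)])
  finally show "(P *\<^sub>v unit_vec k i) $ r = col P i $ r" using r assms by auto
qed (insert assms, auto)

lemma basis_mat_dim:
  assumes b: "basis_mat n P W"
  shows "subspace_dim n W = dim_col P"
proof -
  define k where "k = dim_col P"
  have P: "P \<in> carrier_mat n k" using b unfolding basis_mat_def k_def by auto
  have injP: "\<And>y. y \<in> carrier_vec k \<Longrightarrow> P *\<^sub>v y = 0\<^sub>v n \<Longrightarrow> y = 0\<^sub>v k"
    using b unfolding basis_mat_def k_def by auto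
  have W: "W = (\<lambda>y. P *\<^sub>v y) ` carrier_vec k" using b unfolding basis_mat_def k_def by auto
  have cs0: "vec_space.col_space n P = W" unfolding vec_space.col_space_eq[OF P] W using P by auto
  have dist: "distinct (cols P)"
  proof (rule ccontr)
    assume "\<not> distinct (cols P)"
    then obtain i j where ij: "i < k" "j < k" "i \<noteq> j" "cols P ! i = cols P ! j"
      using P by (auto simp: distinct_conv_nth)
    let ?v = "unit_vec k i - unit_vec k j :: 'a vec"
    have "P *\<^sub>v ?v = P *\<^sub>v unit_vec k i - P *\<^sub>v unit_vec k j"
      using P by (subst mult_minus_distrib_mat_vec[OF P], auto)
    also have "\<dots> = 0\<^sub>v n" using ij P by (simp add: mult_unit_col)
    finally have e: "P *\<^sub>v ?v = 0\<^sub>v n" .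
    have c: "?v \<in> carrier_vec k" by simp
    have "?v = 0\<^sub>v k" by (rule injP[OF c e])
    moreover have "?v $ i = 1" using ij by auto
    ultimately show False using ij by auto
  qed
  interpret vec_space "TYPE('a)" n .
  have cs: "col_space P = W" by (rule cs0)
  have li: "lin_indpt (set (cols P))"
  proof
    assume "lin_dep (set (cols P))"
    then obtain v where "v \<in> carrier_vec k" "v \<noteq> 0\<^sub>v k" "P *\<^sub>v v = 0\<^sub>v n"
      using lin_depE[OF P _ dist] by metis
    thus False using injP by auto
  qed
  have "rank P = k" by (rule lin_indpt_full_rank[OF P dist li])
  thus ?thesis unfolding rank_def subspace_dim_def cs[symmetric] col_space_def k_def by simp
qed



lemma vf_app[simp]: "u \<in> carrier_vec a \<Longrightarrow> vec_first (u @\<^sub>v w) a = u"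
  unfolding vec_first_def by (rule eq_vecI, auto)
lemma vl_app[simp]: "u \<in> carrier_vec a \<Longrightarrow> w \<in> carrier_vec c \<Longrightarrow> vec_last (u @\<^sub>v w) c = w"
  unfolding vec_last_def by (rule eq_vecI, auto)
lemma zero_app: "0\<^sub>v (a + c) = (0\<^sub>v a :: 'a::zero vec) @\<^sub>v 0\<^sub>v c"
  by (rule eq_vecI, auto)

lemma diag_carrier[simp]: "X \<in> carrier_mat a b \<Longrightarrow> Y \<in> carrier_mat c d \<Longrightarrow>
   diag_sum X Y \<in> carrier_mat (a + c) (b + d)"
  unfolding diag_sum_def by auto

lemma diag_mult_vec: assumes X: "(X::'a::field mat) \<in> carrier_mat a b" and Y: "Y \<in> carrier_mat c d"
  and x: "x \<in> carrier_vec b" and y: "y \<in> carrier_vec d"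
  shows "diag_sum X Y *\<^sub>v (x @\<^sub>v y) = (X *\<^sub>v x) @\<^sub>v (Y *\<^sub>v y)"
  unfolding diag_sum_def using X Y x y
  by (subst four_block_mat_mult_vec[of _ a b _ d _ c], auto)

lemma diag_mult_vec': assumes X: "(X::'a::field mat) \<in> carrier_mat a b" and Y: "Y \<in> carrier_mat c d"
  and x: "x \<in> carrier_vec (b + d)"
  shows "diag_sum X Y *\<^sub>v x = (X *\<^sub>v vec_first x b) @\<^sub>v (Y *\<^sub>v vec_last x d)"
proof -
  have "diag_sum X Y *\<^sub>v x = diag_sum X Y *\<^sub>v (vec_first x b @\<^sub>v vec_last x d)" using x by simp
  also have "\<dots> = (X *\<^sub>v vec_first x b) @\<^sub>v (Y *\<^sub>v vec_last x d)" by (rule diag_mult_vec[OF X Y], auto)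
  finally show ?thesis .
qed

lemma diag_mult: assumes X: "(X::'a::field mat) \<in> carrier_mat a b" and Y: "Y \<in> carrier_mat c d"
  and X': "X' \<in> carrier_mat b e" and Y': "Y' \<in> carrier_mat d f"
  shows "diag_sum X Y * diag_sum X' Y' = diag_sum (X * X') (Y * Y')"
  unfolding diag_sum_def using X Y X' Y'
  by (subst mult_four_block_mat[of _ a b _ d _ c _ _ e _ f], auto)

lemma diag_zero: assumes "Z \<in> carrier_mat 0 0" shows "diag_sum X Z = X"
  unfolding diag_sum_def using assms by (intro eq_matI, auto)

lemma img_diag: assumes X: "(X::'a::field mat) \<in> carrier_mat a b" and Y: "Y \<in> carrier_mat c d"
  shows "(\<lambda>v. diag_sum X Y *\<^sub>v v) ` carrier_vec (b + d) =
    {z \<in> carrier_vec (a + c). vec_first z a \<in> (\<lambda>v. X *\<^sub>v v) ` carrier_vec b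
        \<and> vec_last z c \<in> (\<lambda>v. Y *\<^sub>v v) ` carrier_vec d}" (is "?L = ?R")
proof
  show "?L \<subseteq> ?R"
  proof
    fix z assume "z \<in> ?L"
    then obtain v where v: "v \<in> carrier_vec (b + d)" and z: "z = diag_sum X Y *\<^sub>v v" by auto
    have z': "z = (X *\<^sub>v vec_first v b) @\<^sub>v (Y *\<^sub>v vec_last v d)" using z diag_mult_vec'[OF X Y v] by simp
    have c1: "X *\<^sub>v vec_first v b \<in> carrier_vec a" "Y *\<^sub>v vec_last v d \<in> carrier_vec c" using X Y by auto
    show "z \<in> ?R" unfolding z' using c1 by auto
  qed
  show "?R \<subseteq> ?L"
  proof
    fix z assume "z \<in> ?R"
    then obtain u w where z: "z \<in> carrier_vec (a + c)" and u: "u \<in> carrier_vec b" "vec_first z a = X *\<^sub>v u"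
      and w: "w \<in> carrier_vec d" "vec_last z c = Y *\<^sub>v w" by auto
    have "z = vec_first z a @\<^sub>v vec_last z c" using z by simp
    also have "\<dots> = diag_sum X Y *\<^sub>v (u @\<^sub>v w)" using u w diag_mult_vec[OF X Y u(1) w(1)] by simp
    finally show "z \<in> ?L" using u w by auto
  qed
qed

lemma inj_diag: assumes X: "(X::'a::field mat) \<in> carrier_mat a b" and Y: "Y \<in> carrier_mat c d"
  and iX: "\<forall>y\<in>carrier_vec b. X *\<^sub>v y = 0\<^sub>v a \<longrightarrow> y = 0\<^sub>v b"
  and iY: "\<forall>y\<in>carrier_vec d. Y *\<^sub>v y = 0\<^sub>v c \<longrightarrow> y = 0\<^sub>v d"
  shows "\<forall>y\<in>carrier_vec (b + d). diag_sum X Y *\<^sub>v y = 0\<^sub>v (a + c) \<longrightarrow> y = 0\<^sub>v (b + d)"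
proof (intro ballI impI)
  fix y assume y: "y \<in> carrier_vec (b + d)" and e: "diag_sum X Y *\<^sub>v y = 0\<^sub>v (a + c)"
  have "(X *\<^sub>v vec_first y b) @\<^sub>v (Y *\<^sub>v vec_last y d) = 0\<^sub>v a @\<^sub>v 0\<^sub>v c"
    using e diag_mult_vec'[OF X Y y] zero_app by metis
  hence "X *\<^sub>v vec_first y b = 0\<^sub>v a" "Y *\<^sub>v vec_last y d = 0\<^sub>v c"
    using X by (subst (asm) append_vec_eq[of _ a], auto)+
  hence "vec_first y b = 0\<^sub>v b" "vec_last y d = 0\<^sub>v d" using iX iY by auto
  hence "y = 0\<^sub>v b @\<^sub>v 0\<^sub>v d" using vec_first_last_append[OF y] by metis
  thus "y = 0\<^sub>v (b + d)" using zero_app by metis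
qed



lemma sum_shift_delta: "(\<Sum>j\<in>{0..<k}. (if i = Suc j then 1 else 0) * (f j :: 'a::field)) =
   (if i = 0 \<or> i > k then 0 else f (i - 1))"
proof (cases i)
  case 0 thus ?thesis by simp
next
  case (Suc i')
  have "(\<Sum>j\<in>{0..<k}. (if i = Suc j then 1 else 0) * f j) = (\<Sum>j\<in>{0..<k}. if i' = j then f j else 0)"
    using Suc by (intro sum.cong, auto)
  also have "\<dots> = (if i' \<in> {0..<k} then f i' else 0)" by (simp add: sum.delta sum.delta')
  finally show ?thesis using Suc by auto
qed

lemma sum_id_delta: "(\<Sum>j\<in>{0..<(k::nat)}. (if i = j then 1 else 0) * (f j :: 'a::field)) =
   (if i < k then f i else 0)"
proof -
  have "(\<Sum>j\<in>{0..<k}. (if i = j then 1 else 0) * f j) = (\<Sum>j\<in>{0..<k}. if j = i then f j else 0)"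
    by (intro sum.cong, auto)
  also have "\<dots> = (if i \<in> {0..<k} then f i else 0)" by (rule sum.delta[OF finite_atLeastLessThan])
  finally show ?thesis by auto
qed

lemma jb_mult: assumes x: "x \<in> carrier_vec k"
  shows "(jblock k :: 'a::field mat) *\<^sub>v x = vec k (\<lambda>i. if i = 0 then 0 else x $ (i - 1))"
proof (rule eq_vecI)
  fix i assume "i < dim_vec (vec k (\<lambda>i. if i = 0 then 0 else x $ (i - 1)))"
  hence i: "i < k" by simp
  have "(jblock k *\<^sub>v x) $ i = (\<Sum>j\<in>{0..<k}. (if i = Suc j then 1 else 0) * x $ j)"
    using i x unfolding jblock_def by (auto simp: scalar_prod_def)
  also have "\<dots> = (if i = 0 then 0 else x $ (i - 1))" using i by (subst sum_shift_delta, auto)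
  finally show "(jblock k *\<^sub>v x) $ i = vec k (\<lambda>i. if i = 0 then 0 else x $ (i - 1)) $ i" using i by simp
qed (auto simp: jblock_def)

lemma rt_mult: assumes y: "y \<in> carrier_vec (k - 1)" and k: "k \<ge> 1"
  shows "transpose_mat (Rmat k :: 'a::field mat) *\<^sub>v y = vec k (\<lambda>i. if i = 0 then 0 else y $ (i - 1))"
proof (rule eq_vecI)
  fix i assume "i < dim_vec (vec k (\<lambda>i. if i = 0 then 0 else y $ (i - 1)))"
  hence i: "i < k" by simp
  have "(transpose_mat (Rmat k) *\<^sub>v y) $ i = (\<Sum>j\<in>{0..<k-1}. (if i = Suc j then 1 else 0) * y $ j)"
    using i y unfolding Rmat_def by (auto simp: scalar_prod_def)
  also have "\<dots> = (if i = 0 then 0 else y $ (i - 1))" using i by (subst sum_shift_delta, auto)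
  finally show "(transpose_mat (Rmat k) *\<^sub>v y) $ i = vec k (\<lambda>i. if i = 0 then 0 else y $ (i - 1)) $ i" using i by simp
qed (auto simp: Rmat_def)

lemma lm_mult: assumes x: "x \<in> carrier_vec k"
  shows "(Lmat k :: 'a::field mat) *\<^sub>v x = vec (k - 1) (\<lambda>i. x $ i)"
proof (rule eq_vecI)
  fix i assume "i < dim_vec (vec (k - 1) (\<lambda>i. x $ i))"
  hence i: "i < k - 1" by simp
  have "(Lmat k *\<^sub>v x) $ i = (\<Sum>j\<in>{0..<k}. (if i = j then 1 else 0) * x $ j)"
    using i x unfolding Lmat_def by (auto simp: scalar_prod_def)
  also have "\<dots> = x $ i" using i by (subst sum_id_delta, auto)
  finally show "(Lmat k *\<^sub>v x) $ i = vec (k - 1) (\<lambda>i. x $ i) $ i" using i by simp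
qed (auto simp: Lmat_def)

lemma mat_eq_by_vec: assumes A: "(A :: 'a::field mat) \<in> carrier_mat r c" and B: "B \<in> carrier_mat r c"
  and e: "\<And>x. x \<in> carrier_vec c \<Longrightarrow> A *\<^sub>v x = B *\<^sub>v x"
  shows "A = B"
proof (rule mat_col_eqI)
  fix i assume "i < dim_col B" hence i: "i < c" using B by auto
  show "col A i = col B i" using e[of "unit_vec c i"] mult_unit_col[OF A i] mult_unit_col[OF B i] by simp
qed (insert A B, auto)



definition img :: "nat \<Rightarrow> 'a::field mat \<Rightarrow> 'a vec set" where
  "img n A = (\<lambda>y. A *\<^sub>v y) ` carrier_vec n"

definition good :: "nat \<Rightarrow> nat \<Rightarrow> nat \<Rightarrow> nat \<Rightarrow> 'a::field mat \<times> 'a mat \<Rightarrow> 'a mat \<times> 'a mat \<Rightarrow> 'a mat \<Rightarrow> 'a mat \<Rightarrow> bool" where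
  "good m n m' n' p p' E F \<longleftrightarrow>
    fst p \<in> carrier_mat m n \<and> snd p \<in> carrier_mat m n \<and>
    fst p' \<in> carrier_mat m' n' \<and> snd p' \<in> carrier_mat m' n' \<and>
    E \<in> carrier_mat n n' \<and> F \<in> carrier_mat m m' \<and>
    (\<forall>y\<in>carrier_vec n'. E *\<^sub>v y = 0\<^sub>v n \<longrightarrow> y = 0\<^sub>v n') \<and>
    (\<forall>y\<in>carrier_vec m'. F *\<^sub>v y = 0\<^sub>v m \<longrightarrow> y = 0\<^sub>v m') \<and>
    {x \<in> carrier_vec n. snd p *\<^sub>v x \<in> img n (fst p)} = img n' E \<and>
    img n (fst p) = img m' F \<and>
    fst p * E = F * fst p' \<and> snd p * E = F * snd p'"

lemma img_diag': assumes X: "(X::'a::field mat) \<in> carrier_mat a b" and Y: "Y \<in> carrier_mat c d"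
  and z: "z \<in> carrier_vec (a + c)"
  shows "z \<in> img (b + d) (diag_sum X Y) \<longleftrightarrow> vec_first z a \<in> img b X \<and> vec_last z c \<in> img d Y"
  using img_diag[OF X Y] z unfolding img_def by auto

lemma good_sum:
  assumes g1: "good m1 n1 m1' n1' (A1, B1) (A1', B1') E1 F1"
      and g2: "good m2 n2 m2' n2' (A2, B2) (A2', B2') E2 F2"
  shows "good (m1 + m2) (n1 + n2) (m1' + m2') (n1' + n2') (pair_sum (A1, B1) (A2, B2))
           (pair_sum (A1', B1') (A2', B2')) (diag_sum E1 E2) (diag_sum F1 F2)"
proof -
  from g1 have A1: "A1 \<in> carrier_mat m1 n1" and B1: "B1 \<in> carrier_mat m1 n1"
    and A1': "A1' \<in> carrier_mat m1' n1'" and B1': "B1' \<in> carrier_mat m1' n1'"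
    and E1: "E1 \<in> carrier_mat n1 n1'" and F1: "F1 \<in> carrier_mat m1 m1'"
    and iE1: "\<forall>y\<in>carrier_vec n1'. E1 *\<^sub>v y = 0\<^sub>v n1 \<longrightarrow> y = 0\<^sub>v n1'"
    and iF1: "\<forall>y\<in>carrier_vec m1'. F1 *\<^sub>v y = 0\<^sub>v m1 \<longrightarrow> y = 0\<^sub>v m1'"
    and pre1: "{x \<in> carrier_vec n1. B1 *\<^sub>v x \<in> img n1 A1} = img n1' E1"
    and im1: "img n1 A1 = img m1' F1"
    and c1: "A1 * E1 = F1 * A1'" "B1 * E1 = F1 * B1'"
    unfolding good_def by auto
  from g2 have A2: "A2 \<in> carrier_mat m2 n2" and B2: "B2 \<in> carrier_mat m2 n2"
    and A2': "A2' \<in> carrier_mat m2' n2'" and B2': "B2' \<in> carrier_mat m2' n2'"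
    and E2: "E2 \<in> carrier_mat n2 n2'" and F2: "F2 \<in> carrier_mat m2 m2'"
    and iE2: "\<forall>y\<in>carrier_vec n2'. E2 *\<^sub>v y = 0\<^sub>v n2 \<longrightarrow> y = 0\<^sub>v n2'"
    and iF2: "\<forall>y\<in>carrier_vec m2'. F2 *\<^sub>v y = 0\<^sub>v m2 \<longrightarrow> y = 0\<^sub>v m2'"
    and pre2: "{x \<in> carrier_vec n2. B2 *\<^sub>v x \<in> img n2 A2} = img n2' E2"
    and im2: "img n2 A2 = img m2' F2"
    and c2: "A2 * E2 = F2 * A2'" "B2 * E2 = F2 * B2'"
    unfolding good_def by auto
  let ?A = "diag_sum A1 A2" and ?B = "diag_sum B1 B2" and ?E = "diag_sum E1 E2" and ?F = "diag_sum F1 F2"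
  have pre: "{x \<in> carrier_vec (n1 + n2). ?B *\<^sub>v x \<in> img (n1 + n2) ?A} = img (n1' + n2') ?E"
    (is "?L = ?R")
  proof -
    have "x \<in> ?L \<longleftrightarrow> x \<in> ?R" for x
    proof (cases "x \<in> carrier_vec (n1 + n2)")
      case False
      have cE: "?E \<in> carrier_mat (n1 + n2) (n1' + n2')" using E1 E2 by simp
      have "img (n1' + n2') ?E \<subseteq> carrier_vec (n1 + n2)" unfolding img_def using cE by auto
      thus ?thesis using False by auto
    next
      case True
      have Bx: "?B *\<^sub>v x = (B1 *\<^sub>v vec_first x n1) @\<^sub>v (B2 *\<^sub>v vec_last x n2)"
        by (rule diag_mult_vec'[OF B1 B2 True])
      have cB: "B1 *\<^sub>v vec_first x n1 \<in> carrier_vec m1" "B2 *\<^sub>v vec_last x n2 \<in> carrier_vec m2"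
        using B1 B2 by auto
      have "?B *\<^sub>v x \<in> img (n1 + n2) ?A \<longleftrightarrow>
          B1 *\<^sub>v vec_first x n1 \<in> img n1 A1 \<and> B2 *\<^sub>v vec_last x n2 \<in> img n2 A2"
        unfolding Bx using img_diag'[OF A1 A2, of "(B1 *\<^sub>v vec_first x n1) @\<^sub>v (B2 *\<^sub>v vec_last x n2)"] cB
        by auto
      also have "\<dots> \<longleftrightarrow> vec_first x n1 \<in> img n1' E1 \<and> vec_last x n2 \<in> img n2' E2"
      proof -
        have "vec_first x n1 \<in> {x \<in> carrier_vec n1. B1 *\<^sub>v x \<in> img n1 A1} \<longleftrightarrow> vec_first x n1 \<in> img n1' E1"
          unfolding pre1 ..
        moreover have "vec_last x n2 \<in> {x \<in> carrier_vec n2. B2 *\<^sub>v x \<in> img n2 A2} \<longleftrightarrow> vec_last x n2 \<in> img n2' E2"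
          unfolding pre2 ..
        ultimately show ?thesis by simp
      qed
      also have "\<dots> \<longleftrightarrow> x \<in> img (n1' + n2') ?E" using img_diag'[OF E1 E2 True] by simp
      finally show ?thesis using True by simp
    qed
    thus ?thesis by blast
  qed
  have im: "img (n1 + n2) ?A = img (m1' + m2') ?F"
  proof -
    have "z \<in> img (n1 + n2) ?A \<longleftrightarrow> z \<in> img (m1' + m2') ?F" for z
    proof (cases "z \<in> carrier_vec (m1 + m2)")
      case False
      have cA: "?A \<in> carrier_mat (m1 + m2) (n1 + n2)" "?F \<in> carrier_mat (m1 + m2) (m1' + m2')"
        using A1 A2 F1 F2 by simp_all
      have "img (n1 + n2) ?A \<subseteq> carrier_vec (m1 + m2)" "img (m1' + m2') ?F \<subseteq> carrier_vec (m1 + m2)"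
        unfolding img_def using cA by auto
      thus ?thesis using False by auto
    next
      case True
      show ?thesis using img_diag'[OF A1 A2 True] img_diag'[OF F1 F2 True] im1 im2 by simp
    qed
    thus ?thesis by blast
  qed
  show ?thesis unfolding good_def pair_sum_def fst_conv snd_conv
    using A1 A2 B1 B2 A1' A2' B1' B2' E1 E2 F1 F2 pre im
      inj_diag[OF E1 E2 iE1 iE2] inj_diag[OF F1 F2 iF1 iF2]
      diag_mult[OF A1 A2 E1 E2] diag_mult[OF F1 F2 A1' A2'] diag_mult[OF B1 B2 E1 E2] diag_mult[OF F1 F2 B1' B2'] c1 c2
    by simp
qed

lemma good_surj:
  assumes A: "(A :: 'a::field mat) \<in> carrier_mat m n" and B: "B \<in> carrier_mat m n"
    and s: "img n A = carrier_vec m"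
  shows "good m n m n (A, B) (A, B) (1\<^sub>m n) (1\<^sub>m m)"
proof -
  have i1: "img k (1\<^sub>m k :: 'a mat) = carrier_vec k" for k unfolding img_def by auto
  have pre: "{x \<in> carrier_vec n. B *\<^sub>v x \<in> img n A} = carrier_vec n" unfolding s
    using mult_mat_vec_carrier[OF B] by blast
  show ?thesis unfolding good_def using A B s pre i1 by auto
qed

lemma img_jb: assumes k: "k \<ge> 1"
  shows "img k (jblock k :: 'a::field mat) = {z \<in> carrier_vec k. z $ 0 = 0}"
proof
  show "img k (jblock k :: 'a mat) \<subseteq> {z \<in> carrier_vec k. z $ 0 = 0}"
    unfolding img_def using k by (auto simp: jb_mult)
  show "{z \<in> carrier_vec k. z $ 0 = 0} \<subseteq> img k (jblock k :: 'a mat)"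
  proof
    fix z :: "'a vec" assume z: "z \<in> {z \<in> carrier_vec k. z $ 0 = 0}"
    let ?x = "vec k (\<lambda>i. if i + 1 < k then z $ (i + 1) else 0)"
    have "jblock k *\<^sub>v ?x = z" unfolding jb_mult[OF vec_carrier]
      using z by (intro eq_vecI, auto)
    thus "z \<in> img k (jblock k)" unfolding img_def by (intro image_eqI[where x="?x"], auto)
  qed
qed

lemma img_rt: assumes k: "k \<ge> 1"
  shows "img (k - 1) (transpose_mat (Rmat k) :: 'a::field mat) = {z \<in> carrier_vec k. z $ 0 = 0}"
proof
  show "img (k - 1) (transpose_mat (Rmat k) :: 'a mat) \<subseteq> {z \<in> carrier_vec k. z $ 0 = 0}"
    unfolding img_def using k by (auto simp: rt_mult)
  show "{z \<in> carrier_vec k. z $ 0 = 0} \<subseteq> img (k - 1) (transpose_mat (Rmat k) :: 'a mat)"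
  proof
    fix z :: "'a vec" assume z: "z \<in> {z \<in> carrier_vec k. z $ 0 = 0}"
    let ?x = "vec (k - 1) (\<lambda>i. z $ (i + 1))"
    have "transpose_mat (Rmat k) *\<^sub>v ?x = z" unfolding rt_mult[OF vec_carrier k]
      using z k by (intro eq_vecI, auto)
    thus "z \<in> img (k - 1) (transpose_mat (Rmat k))" unfolding img_def by (intro image_eqI[where x="?x"], auto)
  qed
qed

lemma good_JI: assumes k: "k \<ge> 1"
  shows "good k k (k - 1) (k - 1) (jblock k :: 'a::field mat, 1\<^sub>m k) (jblock (k - 1), 1\<^sub>m (k - 1))
     (transpose_mat (Rmat k)) (transpose_mat (Rmat k))"
proof -
  let ?R = "transpose_mat (Rmat k) :: 'a mat"
  have R: "?R \<in> carrier_mat k (k - 1)" unfolding Rmat_def by auto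
  have J: "(jblock k :: 'a mat) \<in> carrier_mat k k" "(jblock (k - 1) :: 'a mat) \<in> carrier_mat (k - 1) (k - 1)"
    unfolding jblock_def by auto
  have inj: "\<forall>y\<in>carrier_vec (k - 1). ?R *\<^sub>v y = 0\<^sub>v k \<longrightarrow> y = 0\<^sub>v (k - 1)"
  proof (intro ballI impI)
    fix y :: "'a vec" assume y: "y \<in> carrier_vec (k - 1)" and e: "?R *\<^sub>v y = 0\<^sub>v k"
    show "y = 0\<^sub>v (k - 1)"
    proof (rule eq_vecI)
      fix i assume "i < dim_vec (0\<^sub>v (k - 1) :: 'a vec)"
      hence i: "i < k - 1" by simp
      have "(?R *\<^sub>v y) $ (i + 1) = y $ i" unfolding rt_mult[OF y k] using i by auto
      thus "y $ i = 0\<^sub>v (k - 1) $ i" using e i by auto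
    qed (insert y, auto)
  qed
  have pre: "{x \<in> carrier_vec k. 1\<^sub>m k *\<^sub>v x \<in> img k (jblock k :: 'a mat)} = img (k - 1) ?R"
    unfolding img_jb[OF k] img_rt[OF k] by auto
  have m1: "jblock k * ?R = ?R * jblock (k - 1)"
  proof (rule mat_eq_by_vec[of _ k "k - 1"])
    show "jblock k * ?R \<in> carrier_mat k (k - 1)" using J R by auto
    show "?R * jblock (k - 1) \<in> carrier_mat k (k - 1)" using J R by auto
    fix y :: "'a vec" assume y: "y \<in> carrier_vec (k - 1)"
    have "(jblock k * ?R) *\<^sub>v y = jblock k *\<^sub>v (?R *\<^sub>v y)" using J R y by auto
    also have "\<dots> = vec k (\<lambda>i. if i = 0 then 0 else if i = 1 then 0 else y $ (i - 2))"
      unfolding rt_mult[OF y k] by (subst jb_mult, auto intro!: eq_vecI simp: numeral_2_eq_2)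
    also have "\<dots> = ?R *\<^sub>v (jblock (k - 1) *\<^sub>v y)"
      unfolding jb_mult[OF y] using k by (subst rt_mult, auto intro!: eq_vecI simp: numeral_2_eq_2)
    also have "\<dots> = (?R * jblock (k - 1)) *\<^sub>v y" using J R y by auto
    finally show "(jblock k * ?R) *\<^sub>v y = (?R * jblock (k - 1)) *\<^sub>v y" .
  qed
  have m2: "1\<^sub>m k * ?R = ?R * 1\<^sub>m (k - 1)" using R by simp
  show ?thesis unfolding good_def fst_conv snd_conv
    using R J inj pre img_jb[OF k] img_rt[OF k] m1 m2 by auto
qed

lemma LR_surj: "img k (Lmat k :: 'a::field mat) = carrier_vec (k - 1)"
proof
  show "img k (Lmat k :: 'a mat) \<subseteq> carrier_vec (k - 1)" unfolding img_def by (auto simp: lm_mult)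
  show "carrier_vec (k - 1) \<subseteq> img k (Lmat k :: 'a mat)"
  proof
    fix z :: "'a vec" assume z: "z \<in> carrier_vec (k - 1)"
    let ?x = "vec k (\<lambda>i. if i < k - 1 then z $ i else 0)"
    have "Lmat k *\<^sub>v ?x = z" unfolding lm_mult[OF vec_carrier] using z by (intro eq_vecI, auto)
    thus "z \<in> img k (Lmat k)" unfolding img_def by (intro image_eqI[where x="?x"], auto)
  qed
qed

lemma RT_not_surj: assumes k: "k \<ge> 1"
  shows "img (k - 1) (transpose_mat (Rmat k) :: 'a::field mat) \<noteq> carrier_vec k"
proof
  assume "img (k - 1) (transpose_mat (Rmat k) :: 'a mat) = carrier_vec k"
  hence "(unit_vec k 0 :: 'a vec) \<in> img (k - 1) (transpose_mat (Rmat k))" by simp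
  thus False unfolding img_rt[OF k] using k by auto
qed



lemma decomp_snoc: "decomp_pair D (ss @ [s]) = pair_sum (decomp_pair D ss) (summand_pair s)"
  unfolding decomp_pair_def by simp

lemma decomp_Nil: "decomp_pair D [] = (1\<^sub>m (dim_row D), D)"
  unfolding decomp_pair_def by simp

lemma shift_snoc: "shift_decomp (ss @ [s]) = shift_decomp ss @ shift_summand s"
  unfolding shift_decomp_def by simp

lemma shift_Cons: "shift_decomp (s # ss) = shift_summand s @ shift_decomp ss"
  unfolding shift_decomp_def by simp

lemma shift_Nil: "shift_decomp [] = []"
  unfolding shift_decomp_def by simp

lemma shift_app: "shift_decomp (xs @ ys) = shift_decomp xs @ shift_decomp ys"
  unfolding shift_decomp_def by simp

fun rsz :: "summand \<Rightarrow> nat" where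
  "rsz (IJ k) = k" | "rsz (JI k) = k" | "rsz (LR k) = k - 1" | "rsz (LRT k) = k"
fun csz :: "summand \<Rightarrow> nat" where
  "csz (IJ k) = k" | "csz (JI k) = k" | "csz (LR k) = k" | "csz (LRT k) = k - 1"

lemma summand_carrier: "fst (summand_pair s :: 'a::field mat \<times> 'a mat) \<in> carrier_mat (rsz s) (csz s) \<and>
   snd (summand_pair s :: 'a mat \<times> 'a mat) \<in> carrier_mat (rsz s) (csz s)"
  by (cases s, auto simp: jblock_def Lmat_def Rmat_def)

lemma diag_surj: assumes X: "(X::'a::field mat) \<in> carrier_mat a b" and Y: "Y \<in> carrier_mat c d"
  and s: "img (b + d) (diag_sum X Y) = carrier_vec (a + c)"
  shows "img b X = carrier_vec a \<and> img d Y = carrier_vec c"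
proof
  show "img b X = carrier_vec a"
  proof
    show "img b X \<subseteq> carrier_vec a" unfolding img_def using X by auto
    show "carrier_vec a \<subseteq> img b X"
    proof
      fix z :: "'a vec" assume z: "z \<in> carrier_vec a"
      have zc: "z @\<^sub>v 0\<^sub>v c \<in> carrier_vec (a + c)" using z by auto
      hence "z @\<^sub>v 0\<^sub>v c \<in> img (b + d) (diag_sum X Y)" using s by simp
      thus "z \<in> img b X" using img_diag'[OF X Y zc] z by simp
    qed
  qed
  show "img d Y = carrier_vec c"
  proof
    show "img d Y \<subseteq> carrier_vec c" unfolding img_def using Y by auto
    show "carrier_vec c \<subseteq> img d Y"
    proof
      fix z :: "'a vec" assume z: "z \<in> carrier_vec c"
      have zc: "0\<^sub>v a @\<^sub>v z \<in> carrier_vec (a + c)" using z by auto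
      hence "0\<^sub>v a @\<^sub>v z \<in> img (b + d) (diag_sum X Y)" using s by simp
      have "vec_last (0\<^sub>v a @\<^sub>v z) c = z" by (rule vl_app[of _ a], auto simp: z)
      thus "z \<in> img d Y" using img_diag'[OF X Y zc] z \<open>0\<^sub>v a @\<^sub>v z \<in> img (b + d) (diag_sum X Y)\<close> by simp
    qed
  qed
qed

lemma decomp_carrier:
  assumes D: "(D :: 'a::field mat) \<in> carrier_mat r r"
  shows "fst (decomp_pair D ss) \<in> carrier_mat (r + sum_list (map rsz ss)) (r + sum_list (map csz ss)) \<and>
         snd (decomp_pair D ss) \<in> carrier_mat (r + sum_list (map rsz ss)) (r + sum_list (map csz ss))"
proof (induction ss rule: rev_induct)
  case Nil thus ?case using D by (simp add: decomp_Nil)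
next
  case (snoc s ss)
  from summand_carrier[of s, where 'a='a] have sc: "fst (summand_pair s :: 'a mat \<times> 'a mat) \<in> carrier_mat (rsz s) (csz s)"
      "snd (summand_pair s :: 'a mat \<times> 'a mat) \<in> carrier_mat (rsz s) (csz s)" by auto
  show ?case unfolding decomp_snoc pair_sum_def fst_conv snd_conv
    using diag_carrier[OF conjunct1[OF snoc.IH] sc(1)] diag_carrier[OF conjunct2[OF snoc.IH] sc(2)]
    by (simp add: add.assoc)
qed

lemma surj_noLRT:
  assumes D: "(D :: 'a::field mat) \<in> carrier_mat r r"
    and sz: "\<forall>s\<in>set ss. summand_size s \<ge> 1"
    and s: "img (r + sum_list (map csz ss)) (snd (decomp_pair D ss)) = carrier_vec (r + sum_list (map rsz ss))"
  shows "\<forall>s\<in>set ss. \<not> (\<exists>k. s = LRT k)"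
  using sz s
proof (induction ss rule: rev_induct)
  case Nil thus ?case by simp
next
  case (snoc t ss)
  from summand_carrier[of t, where 'a='a] have sc: "snd (summand_pair t :: 'a mat \<times> 'a mat) \<in> carrier_mat (rsz t) (csz t)" by auto
  have c: "snd (decomp_pair D ss) \<in> carrier_mat (r + sum_list (map rsz ss)) (r + sum_list (map csz ss))"
    using decomp_carrier[OF D] by blast
  have "img (r + sum_list (map csz ss) + csz t) (diag_sum (snd (decomp_pair D ss)) (snd (summand_pair t)))
      = carrier_vec (r + sum_list (map rsz ss) + rsz t)"
    using snoc.prems(2) unfolding decomp_snoc pair_sum_def by (simp add: add.assoc)
  from diag_surj[OF c sc this] have s1: "img (r + sum_list (map csz ss)) (snd (decomp_pair D ss)) = carrier_vec (r + sum_list (map rsz ss))"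
    and s2: "img (csz t) (snd (summand_pair t :: 'a mat \<times> 'a mat)) = carrier_vec (rsz t)" by auto
  have IH: "\<forall>s\<in>set ss. \<not> (\<exists>k. s = LRT k)" using snoc.IH snoc.prems(1) s1 by auto
  have "\<not> (\<exists>k. t = LRT k)"
  proof
    assume "\<exists>k. t = LRT k"
    then obtain k where t: "t = LRT k" by auto
    have k: "k \<ge> 1" using snoc.prems(1) t by auto
    show False using s2 RT_not_surj[OF k, where 'a='a] t by simp
  qed
  thus ?case using IH by auto
qed

lemma good_decomp:
  assumes D: "(D :: 'a::field mat) \<in> carrier_mat r r"
    and sz: "\<forall>s\<in>set ss. summand_size s \<ge> 1"
    and nl: "\<forall>s\<in>set ss. \<not> (\<exists>k. s = LRT k)"
  shows "\<exists>m n m' n' E F. good m n m' n' (decomp_pair D ss) (decomp_pair D (shift_decomp ss)) E F"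
  using sz nl
proof (induction ss rule: rev_induct)
  case Nil
  have "img r (1\<^sub>m r :: 'a mat) = carrier_vec r" unfolding img_def by auto
  from good_surj[OF _ D this] have "good r r r r (decomp_pair D []) (decomp_pair D (shift_decomp [])) (1\<^sub>m r) (1\<^sub>m r)"
    using D by (simp add: decomp_Nil shift_Nil)
  thus ?case by blast
next
  case (snoc s ss)
  then obtain m n m' n' E F where g: "good m n m' n' (decomp_pair D ss) (decomp_pair D (shift_decomp ss)) E F"
    by auto
  let ?p = "decomp_pair D ss" and ?p' = "decomp_pair D (shift_decomp ss)"
  have g': "good m n m' n' (fst ?p, snd ?p) (fst ?p', snd ?p') E F" using g by simp
  have ps: "?p = (fst ?p, snd ?p)" "?p' = (fst ?p', snd ?p')" by simp_all
  have k1: "summand_size s \<ge> 1" and nls: "\<not> (\<exists>k. s = LRT k)" using snoc.prems by auto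
  have fin: "\<exists>m n m' n' E F. good m n m' n' (decomp_pair D (ss @ [s])) (decomp_pair D (shift_decomp (ss @ [s]))) E F"
    if gg: "good M N M' N' (pair_sum (fst ?p, snd ?p) q) (pair_sum (fst ?p', snd ?p') q') E' F'"
    and q: "q = summand_pair s" and q': "decomp_pair D (shift_decomp (ss @ [s])) = pair_sum ?p' q'"
    for M N M' N' E' F' q q'
  proof -
    have "good M N M' N' (decomp_pair D (ss @ [s])) (decomp_pair D (shift_decomp (ss @ [s]))) E' F'"
      using gg unfolding q q' decomp_snoc by simp
    thus ?thesis by blast
  qed
  show ?case
  proof (cases s)
    case (IJ k)
    have "img k (1\<^sub>m k :: 'a mat) = carrier_vec k" unfolding img_def by auto
    from good_surj[OF _ _ this, where B="jblock k"]
    have g2: "good k k k k (1\<^sub>m k, jblock k) (1\<^sub>m k, jblock k :: 'a mat) (1\<^sub>m k) (1\<^sub>m k)" by (simp add: jblock_def)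
    show ?thesis by (rule fin[OF good_sum[OF g' g2]]) (simp_all add: IJ decomp_snoc shift_snoc)
  next
    case (LR k)
    from good_surj[OF _ _ LR_surj[of k], where B="Rmat k"]
    have g2: "good (k - 1) k (k - 1) k (Lmat k, Rmat k) (Lmat k, Rmat k :: 'a mat) (1\<^sub>m k) (1\<^sub>m (k - 1))"
      by (simp add: Lmat_def Rmat_def)
    show ?thesis by (rule fin[OF good_sum[OF g' g2]]) (simp_all add: LR decomp_snoc shift_snoc)
  next
    case (LRT k) thus ?thesis using nls by auto
  next
    case (JI k)
    have k: "k \<ge> 1" using k1 JI by simp
    from good_JI[OF k, where 'a='a]
    have g2: "good k k (k - 1) (k - 1) (jblock k :: 'a mat, 1\<^sub>m k) (jblock (k - 1), 1\<^sub>m (k - 1))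
      (transpose_mat (Rmat k)) (transpose_mat (Rmat k))" .
    note gs = good_sum[OF g' g2]
    show ?thesis
    proof (cases "k = 1")
      case True
      have z: "(jblock 0 :: 'a mat) \<in> carrier_mat 0 0" "(1\<^sub>m 0 :: 'a mat) \<in> carrier_mat 0 0"
        by (auto simp: jblock_def)
      have eq0: "pair_sum ?p' (jblock 0, 1\<^sub>m 0) = ?p'"
        unfolding pair_sum_def using diag_zero[OF z(1)] diag_zero[OF z(2)] by simp
      have e1: "shift_decomp (ss @ [s]) = shift_decomp ss" using True JI by (simp add: shift_snoc)
      have e2: "pair_sum ?p' (jblock (k - 1), 1\<^sub>m (k - 1)) = ?p'" using True eq0 by simp
      have q': "decomp_pair D (shift_decomp (ss @ [s])) = pair_sum ?p' (jblock (k - 1), 1\<^sub>m (k - 1))"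
        unfolding e1 e2 ..
      show ?thesis by (rule fin[OF gs _ q']) (simp add: JI)
    next
      case False
      hence sh: "shift_summand (JI k) = [JI (k - 1)]" using k by simp
      have q': "decomp_pair D (shift_decomp (ss @ [s])) = pair_sum ?p' (jblock (k - 1), 1\<^sub>m (k - 1))"
        unfolding JI shift_snoc sh decomp_snoc by simp
      show ?thesis by (rule fin[OF gs _ q']) (simp add: JI)
    qed
  qed
qed

lemma count_formula:
  "int (count_list ss (JI 1)) = int (sum_list (map rsz ss)) - 2 * int (sum_list (map rsz (shift_decomp ss)))
     + int (sum_list (map rsz (shift_decomp (shift_decomp ss))))"
proof (induction ss)
  case Nil thus ?case by (simp add: shift_Nil)
next
  case (Cons s ss)
  have e: "int (count_list [s] (JI 1)) = int (sum_list (map rsz [s])) - 2 * int (sum_list (map rsz (shift_decomp [s])))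
     + int (sum_list (map rsz (shift_decomp (shift_decomp [s]))))"
  proof (cases s)
    case (JI k)
    show ?thesis unfolding JI shift_decomp_def
      by (cases "k = 0"; cases "k = 1"; cases "k = 2"; simp)
  qed (simp_all add: shift_decomp_def)
  have l: "s # ss = [s] @ ss" by simp
  have a1: "count_list (s # ss) (JI 1) = count_list [s] (JI 1) + count_list ss (JI 1)" by simp
  have a2: "sum_list (map rsz (s # ss)) = sum_list (map rsz [s]) + sum_list (map rsz ss)" by simp
  have a3: "sum_list (map rsz (shift_decomp (s # ss))) = sum_list (map rsz (shift_decomp [s])) + sum_list (map rsz (shift_decomp ss))"
    by (subst l, simp only: shift_app map_append sum_list_append)
  have a4: "sum_list (map rsz (shift_decomp (shift_decomp (s # ss)))) = sum_list (map rsz (shift_decomp (shift_decomp [s]))) + sum_list (map rsz (shift_decomp (shift_decomp ss)))"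
    by (subst l, simp only: shift_app map_append sum_list_append)
  show ?case unfolding a1 a2 a3 a4 using Cons.IH e by simp
qed



lemma coeff_exists:
  assumes b: "basis_mat n P W" and Q: "(Q :: 'a::field mat) \<in> carrier_mat n c"
    and cols: "\<And>j. j < c \<Longrightarrow> col Q j \<in> W"
  shows "\<exists>T. T \<in> carrier_mat (dim_col P) c \<and> Q = P * T"
proof -
  define k where "k = dim_col P"
  have P: "P \<in> carrier_mat n k" using b unfolding basis_mat_def k_def by auto
  have W: "W = (\<lambda>y. P *\<^sub>v y) ` carrier_vec k" using b unfolding basis_mat_def k_def by auto
  have "\<forall>j. \<exists>y. j < c \<longrightarrow> y \<in> carrier_vec k \<and> col Q j = P *\<^sub>v y" using cols W by blast
  then obtain f where f: "\<And>j. j < c \<Longrightarrow> f j \<in> carrier_vec k \<and> col Q j = P *\<^sub>v f j" by metis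
  define T where "T = mat k c (\<lambda>(i, j). f j $ i)"
  have T: "T \<in> carrier_mat k c" unfolding T_def by auto
  have cT: "col T j = f j" if j: "j < c" for j
    unfolding T_def using f[OF j] j by (intro eq_vecI, auto)
  have "Q = P * T"
  proof (rule mat_col_eqI)
    fix j assume "j < dim_col (P * T)" hence j: "j < c" using T by auto
    show "col Q j = col (P * T) j" using col_mult2[OF P T j] cT[OF j] f[OF j] by simp
  qed (insert P Q T, auto)
  thus ?thesis using T k_def by auto
qed

lemma basis_cancel:
  assumes b: "basis_mat n P W" and Z1: "(Z1 :: 'a::field mat) \<in> carrier_mat (dim_col P) c"
    and Z2: "Z2 \<in> carrier_mat (dim_col P) c" and e: "P * Z1 = P * Z2"
  shows "Z1 = Z2"
proof -
  define k where "k = dim_col P"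
  have P: "P \<in> carrier_mat n k" using b unfolding basis_mat_def k_def by auto
  have inj: "\<And>y. y \<in> carrier_vec k \<Longrightarrow> P *\<^sub>v y = 0\<^sub>v n \<Longrightarrow> y = 0\<^sub>v k"
    using b unfolding basis_mat_def k_def by auto
  have Z1': "Z1 \<in> carrier_mat k c" and Z2': "Z2 \<in> carrier_mat k c" using Z1 Z2 k_def by auto
  show ?thesis
  proof (rule mat_col_eqI)
    fix j assume "j < dim_col Z2" hence j: "j < c" using Z2 by auto
    have c1: "col Z1 j \<in> carrier_vec k" "col Z2 j \<in> carrier_vec k" using Z1' Z2' j by auto
    have "P *\<^sub>v (col Z1 j - col Z2 j) = P *\<^sub>v col Z1 j - P *\<^sub>v col Z2 j"
      using c1 by (subst mult_minus_distrib_mat_vec[OF P], auto)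
    also have "\<dots> = col (P * Z1) j - col (P * Z2) j" using col_mult2[OF P Z1' j] col_mult2[OF P Z2' j] by simp
    also have "\<dots> = 0\<^sub>v n" unfolding e using P Z2' j by auto
    finally have "col Z1 j - col Z2 j = 0\<^sub>v k" using c1 by (intro inj, auto)
    note d = this
    show "col Z1 j = col Z2 j"
    proof (rule eq_vecI)
      fix i assume "i < dim_vec (col Z2 j)"
      hence i: "i < k" using Z2' by auto
      have "(col Z1 j - col Z2 j) $ i = 0" unfolding d using i by simp
      moreover have "(col Z1 j - col Z2 j) $ i = col Z1 j $ i - col Z2 j $ i"
        using i c1 Z2' by (intro index_minus_vec(1), auto)
      ultimately show "col Z1 j $ i = col Z2 j $ i" by simp
    qed (insert c1 Z1' Z2', auto)
  qed (insert Z1' Z2', auto)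
qed

lemma basis_col_in:
  assumes b: "basis_mat n P W" and j: "j < dim_col P"
  shows "col P j \<in> W"
proof -
  have P: "(P :: 'a::field mat) \<in> carrier_mat n (dim_col P)" using b unfolding basis_mat_def by auto
  have "col P j = P *\<^sub>v unit_vec (dim_col P) j" using mult_unit_col[OF P j] by simp
  thus ?thesis using b unfolding basis_mat_def by auto
qed

lemma basis_change:
  assumes b: "basis_mat n P W" and b': "basis_mat n P' W"
  shows "\<exists>T. T \<in> carrier_mat (dim_col P') (dim_col P) \<and> invertible_mat (T :: 'a::field mat) \<and> P = P' * T"
proof -
  define k where "k = dim_col P"
  have kk: "dim_col P' = k" using basis_mat_dim[OF b] basis_mat_dim[OF b'] k_def by simp
  have P: "P \<in> carrier_mat n k" using b unfolding basis_mat_def k_def by auto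
  have P': "P' \<in> carrier_mat n k" using b' kk unfolding basis_mat_def by auto
  have cP: "col P j \<in> W" if "j < k" for j using basis_col_in[OF b] that k_def by blast
  have cP': "col P' j \<in> W" if "j < k" for j using basis_col_in[OF b'] that kk by blast
  from coeff_exists[OF b' P cP] obtain T where T0: "T \<in> carrier_mat (dim_col P') k" and eT: "P = P' * T"
    by blast
  from coeff_exists[OF b P' cP'] obtain T' where T0': "T' \<in> carrier_mat (dim_col P) k" and eT': "P' = P * T'"
    by blast
  have T: "T \<in> carrier_mat k k" using T0 kk by simp
  have T': "T' \<in> carrier_mat k k" using T0' k_def by simp
  have "P * (T' * T) = (P * T') * T" by (rule assoc_mult_mat[symmetric, OF P T' T])
  also have "\<dots> = P' * T" using eT' by simp
  also have "\<dots> = P" using eT by simp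
  also have "\<dots> = P * 1\<^sub>m k" using P by simp
  finally have "P * (T' * T) = P * 1\<^sub>m k" .
  hence i1: "T' * T = 1\<^sub>m k" using basis_cancel[OF b, of "T' * T" k "1\<^sub>m k"] T T' k_def by simp
  have i2: "T * T' = 1\<^sub>m k" by (rule mat_mult_left_right_inverse[OF T' T i1])
  have "invertible_mat T" unfolding invertible_mat_def inverts_mat_def square_mat.simps
    using T T' i1 i2 by (intro conjI exI[of _ T'], auto)
  thus ?thesis using T eT kk by auto
qed

lemma basis_id: "basis_mat n (1\<^sub>m n :: 'a::field mat) (carrier_vec n)"
  unfolding basis_mat_def by auto

lemma inv_obtain: assumes "invertible_mat (A :: 'a::field mat)" and "A \<in> carrier_mat k k"
  shows "\<exists>B. B \<in> carrier_mat k k \<and> A * B = 1\<^sub>m k \<and> B * A = 1\<^sub>m k"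
proof -
  from assms obtain B where AB: "A * B = 1\<^sub>m (dim_row A)" and BA: "B * A = 1\<^sub>m (dim_row B)"
    unfolding invertible_mat_def inverts_mat_def by auto
  have "dim_col (A * B) = dim_row A" unfolding AB by simp
  hence "dim_col B = k" using assms(2) by simp
  moreover have "dim_col (B * A) = dim_row B" unfolding BA by simp
  hence "dim_row B = k" using assms(2) by simp
  ultimately show ?thesis using AB BA assms(2) by auto
qed



lemma inv_vec: assumes "(A :: 'a::field mat) \<in> carrier_mat k k" "B \<in> carrier_mat k k" "B * A = 1\<^sub>m k"
  "u \<in> carrier_vec k" shows "B *\<^sub>v (A *\<^sub>v u) = u"
proof -
  have "B *\<^sub>v (A *\<^sub>v u) = (B * A) *\<^sub>v u" by (rule assoc_mult_mat_vec[symmetric], insert assms, auto)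
  also have "\<dots> = 1\<^sub>m k *\<^sub>v u" unfolding assms(3) ..
  also have "\<dots> = u" using assms(4) by simp
  finally show ?thesis .
qed

lemma mat_vec_zero: "(A :: 'a::field mat) \<in> carrier_mat a b \<Longrightarrow> A *\<^sub>v 0\<^sub>v b = 0\<^sub>v a"
  by (rule eq_vecI, auto)

lemma repr:
  assumes A1: "(A1 :: 'a::field mat) \<in> carrier_mat m n" and P1: "P1 \<in> carrier_mat n n"
    and P1i: "P1i \<in> carrier_mat n n" and PP: "P1 * P1i = 1\<^sub>m n"
    and Q1: "Q1 \<in> carrier_mat m m" and M1: "M1 \<in> carrier_mat m n" and QM: "Q1 * M1 = A1 * P1"
    and S: "S \<in> carrier_mat m m" and Si: "Si \<in> carrier_mat m m" and SS: "Si * S = 1\<^sub>m m"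
    and CA: "CA \<in> carrier_mat m n" and R: "R \<in> carrier_mat n n" and SM: "S * M1 = CA * R"
    and x: "x \<in> carrier_vec n"
  shows "A1 *\<^sub>v x = (Q1 * Si) *\<^sub>v (CA *\<^sub>v ((R * P1i) *\<^sub>v x))"
proof -
  have z: "P1i *\<^sub>v x \<in> carrier_vec n" using P1i x by auto
  have "A1 *\<^sub>v x = A1 *\<^sub>v (P1 *\<^sub>v (P1i *\<^sub>v x))" using inv_vec[OF P1i P1 PP x] by simp
  also have "\<dots> = (A1 * P1) *\<^sub>v (P1i *\<^sub>v x)" using A1 P1 z by simp
  also have "\<dots> = Q1 *\<^sub>v (M1 *\<^sub>v (P1i *\<^sub>v x))" unfolding QM[symmetric] using Q1 M1 z by simp
  also have "M1 *\<^sub>v (P1i *\<^sub>v x) = Si *\<^sub>v (S *\<^sub>v (M1 *\<^sub>v (P1i *\<^sub>v x)))"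
    using inv_vec[OF S Si SS, of "M1 *\<^sub>v (P1i *\<^sub>v x)"] M1 z by simp
  also have "S *\<^sub>v (M1 *\<^sub>v (P1i *\<^sub>v x)) = (S * M1) *\<^sub>v (P1i *\<^sub>v x)" using S M1 z by simp
  also have "\<dots> = CA *\<^sub>v (R *\<^sub>v (P1i *\<^sub>v x))" unfolding SM using CA R z by simp
  finally show ?thesis using Q1 Si CA R P1i x by simp
qed

lemma shift_props:
  assumes "\<forall>s\<in>set ss. summand_size s \<ge> 1 \<and> \<not> (\<exists>k. s = LRT k)"
  shows "\<forall>s\<in>set (shift_decomp ss). summand_size s \<ge> 1 \<and> \<not> (\<exists>k. s = LRT k)"
  using assms
proof (induction ss)
  case Nil thus ?case by (simp add: shift_Nil)
next
  case (Cons s ss)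
  have "\<forall>t\<in>set (shift_summand s). summand_size t \<ge> 1 \<and> \<not> (\<exists>k. t = LRT k)"
    using Cons.prems by (cases s, auto)
  thus ?case using Cons.IH Cons.prems unfolding shift_Cons set_append by auto
qed

lemma inj_comp:
  assumes X: "(X :: 'a::field mat) \<in> carrier_mat m m" and Xi: "Xi \<in> carrier_mat m m" and XX: "Xi * X = 1\<^sub>m m"
    and F: "F \<in> carrier_mat m k" and iF: "\<forall>y\<in>carrier_vec k. F *\<^sub>v y = 0\<^sub>v m \<longrightarrow> y = 0\<^sub>v k"
  shows "\<forall>y\<in>carrier_vec k. (X * F) *\<^sub>v y = 0\<^sub>v m \<longrightarrow> y = 0\<^sub>v k"
proof (intro ballI impI)
  fix y assume y: "y \<in> carrier_vec k" and e: "(X * F) *\<^sub>v y = 0\<^sub>v m"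
  have Fy: "F *\<^sub>v y \<in> carrier_vec m" using F y by auto
  have "F *\<^sub>v y = Xi *\<^sub>v (X *\<^sub>v (F *\<^sub>v y))" using inv_vec[OF X Xi XX Fy] by simp
  also have "X *\<^sub>v (F *\<^sub>v y) = 0\<^sub>v m" using e X F y by simp
  finally have "F *\<^sub>v y = 0\<^sub>v m" using mat_vec_zero[OF Xi] by simp
  thus "y = 0\<^sub>v k" using iF y by auto
qed

lemma inj_comp2:
  assumes X: "(X :: 'a::field mat) \<in> carrier_mat m k" and iX: "\<forall>y\<in>carrier_vec k. X *\<^sub>v y = 0\<^sub>v m \<longrightarrow> y = 0\<^sub>v k"
    and F: "F \<in> carrier_mat k l" and iF: "\<forall>y\<in>carrier_vec l. F *\<^sub>v y = 0\<^sub>v k \<longrightarrow> y = 0\<^sub>v l"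
  shows "\<forall>y\<in>carrier_vec l. (X * F) *\<^sub>v y = 0\<^sub>v m \<longrightarrow> y = 0\<^sub>v l"
proof (intro ballI impI)
  fix y assume y: "y \<in> carrier_vec l" and e: "(X * F) *\<^sub>v y = 0\<^sub>v m"
  have Fy: "F *\<^sub>v y \<in> carrier_vec k" using F y by auto
  have "X *\<^sub>v (F *\<^sub>v y) = 0\<^sub>v m" using e X F y by simp
  hence "F *\<^sub>v y = 0\<^sub>v k" using iX Fy by auto
  thus "y = 0\<^sub>v l" using iF y by auto
qed

lemma carrier_uniq: "A \<in> carrier_mat a b \<Longrightarrow> A \<in> carrier_mat c d \<Longrightarrow> a = c \<and> b = d"
  by auto

theorem lemma2:
  fixes A1 B1 :: "'a::field mat" and m n :: nat
    and P1 Q1 M1 N1 P2 Q2 M2 N2 D :: "'a mat" and ss :: "summand list"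
    and U2 V2 V3 :: "'a vec set"
  assumes A1: "A1 \<in> carrier_mat m n" and B1: "B1 \<in> carrier_mat m n"
    and surj_B1: "(\<lambda>x. B1 *\<^sub>v x) ` carrier_vec n = carrier_vec m"
    and V2_def: "V2 = (\<lambda>x. A1 *\<^sub>v x) ` carrier_vec n"
    and U2_def: "U2 = {x \<in> carrier_vec n. B1 *\<^sub>v x \<in> V2}"
    and V3_def: "V3 = (\<lambda>x. A1 *\<^sub>v x) ` U2"
    and P1: "basis_mat n P1 (carrier_vec n)" and Q1: "basis_mat m Q1 (carrier_vec m)"
    and M1: "mat_wrt A1 P1 Q1 M1" and N1: "mat_wrt B1 P1 Q1 N1"
    and P2: "basis_mat n P2 U2" and Q2: "basis_mat m Q2 V2"
    and M2: "mat_wrt A1 P2 Q2 M2" and N2: "mat_wrt B1 P2 Q2 N2"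
    and dec: "regularizing_decomp M1 N1 D ss"
  shows "regularizing_decomp M2 N2 D (shift_decomp ss) \<and>
         int (count_list ss (JI 1)) =
           int m - 2 * int (subspace_dim m V2) + int (subspace_dim m V3)"
proof -
  from basis_change[OF Q1 basis_id[of m]] obtain TQ where
    TQ: "TQ \<in> carrier_mat m (dim_col Q1)" "invertible_mat TQ" "Q1 = 1\<^sub>m m * TQ" by auto
  have Q1eq: "Q1 = TQ" using TQ(1,3) by simp
  have "square_mat TQ" using TQ(2) unfolding invertible_mat_def by auto
  hence sqQ: "dim_col TQ = dim_row TQ" by simp
  have "TQ \<in> carrier_mat m m" using TQ(1) sqQ unfolding carrier_mat_def by simp
  hence Q1c: "Q1 \<in> carrier_mat m m" unfolding Q1eq .
  obtain Q1i where Q1i: "Q1i \<in> carrier_mat m m" "Q1 * Q1i = 1\<^sub>m m" "Q1i * Q1 = 1\<^sub>m m"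
    using inv_obtain[OF _ Q1c] TQ(2) Q1eq by auto
  from basis_change[OF P1 basis_id[of n]] obtain TP where
    TP: "TP \<in> carrier_mat n (dim_col P1)" "invertible_mat TP" "P1 = 1\<^sub>m n * TP" by auto
  have P1eq: "P1 = TP" using TP(1,3) by simp
  have "square_mat TP" using TP(2) unfolding invertible_mat_def by auto
  hence sqP: "dim_col TP = dim_row TP" by simp
  have "TP \<in> carrier_mat n n" using TP(1) sqP unfolding carrier_mat_def by simp
  hence P1c: "P1 \<in> carrier_mat n n" unfolding P1eq .
  obtain P1i where P1i: "P1i \<in> carrier_mat n n" "P1 * P1i = 1\<^sub>m n" "P1i * P1 = 1\<^sub>m n"
    using inv_obtain[OF _ P1c] TP(2) P1eq by auto
  have M1c: "M1 \<in> carrier_mat m n" and QM: "Q1 * M1 = A1 * P1"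
    using M1 Q1c P1c unfolding mat_wrt_def by auto
  have N1c: "N1 \<in> carrier_mat m n" and QN: "Q1 * N1 = B1 * P1"
    using N1 Q1c P1c unfolding mat_wrt_def by auto
  define r where "r = dim_row D"
  define CA where "CA = fst (decomp_pair D ss)"
  define CB where "CB = snd (decomp_pair D ss)"
  define ss' where "ss' = shift_decomp ss"
  define CA' where "CA' = fst (decomp_pair D ss')"
  define CB' where "CB' = snd (decomp_pair D ss')"
  have Dc: "D \<in> carrier_mat r r" and Dinv: "invertible_mat D" and sz: "\<forall>s\<in>set ss. summand_size s \<ge> 1"
    and pe: "pair_equiv (M1, N1) (CA, CB)"
    using dec unfolding regularizing_decomp_def r_def CA_def CB_def by auto
  from pe M1c obtain S R where CA: "CA \<in> carrier_mat m n" and CB: "CB \<in> carrier_mat m n"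
    and S: "S \<in> carrier_mat m m" and R: "R \<in> carrier_mat n n"
    and Sinv: "invertible_mat S" and Rinv: "invertible_mat R"
    and SM: "S * M1 = CA * R" and SN: "S * N1 = CB * R"
    unfolding pair_equiv_def Let_def by auto
  obtain Si where Si: "Si \<in> carrier_mat m m" "S * Si = 1\<^sub>m m" "Si * S = 1\<^sub>m m"
    using inv_obtain[OF Sinv S] by auto
  obtain Ri where Ri: "Ri \<in> carrier_mat n n" "R * Ri = 1\<^sub>m n" "Ri * R = 1\<^sub>m n"
    using inv_obtain[OF Rinv R] by auto
  define X where "X = Q1 * Si"
  define Xi where "Xi = S * Q1i"
  define Y where "Y = R * P1i"
  define Yi where "Yi = P1 * Ri"
  have Xc: "X \<in> carrier_mat m m" and Xic: "Xi \<in> carrier_mat m m" unfolding X_def Xi_def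
    using Q1c Si Q1i S by auto
  have Yc: "Y \<in> carrier_mat n n" and Yic: "Yi \<in> carrier_mat n n" unfolding Y_def Yi_def
    using P1c Ri P1i R by auto
  have inv4: "(A * B) * (C * E) = 1\<^sub>m k" if "(A :: 'a mat) \<in> carrier_mat k k" "B \<in> carrier_mat k k" "C \<in> carrier_mat k k"
    "E \<in> carrier_mat k k" "B * C = 1\<^sub>m k" "A * E = 1\<^sub>m k" for A B C E k
  proof -
    have "(A * B) * (C * E) = A * (B * (C * E))" by (rule assoc_mult_mat, insert that, auto)
    also have "B * (C * E) = (B * C) * E" by (rule assoc_mult_mat[symmetric], insert that, auto)
    also have "\<dots> = E" unfolding that(5) using that(4) by simp
    finally show ?thesis using that(6) by simp
  qed
  have XiX: "Xi * X = 1\<^sub>m m" unfolding X_def Xi_def by (rule inv4[OF S Q1i(1) Q1c Si(1) Q1i(3) Si(2)])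
  have YiY: "Yi * Y = 1\<^sub>m n" unfolding Y_def Yi_def by (rule inv4[OF P1c Ri(1) R P1i(1) Ri(3) P1i(2)])
  have YYi: "Y * Yi = 1\<^sub>m n" unfolding Y_def Yi_def by (rule inv4[OF R P1i(1) P1c Ri(1) P1i(3) Ri(2)])
  have Av: "A1 *\<^sub>v x = X *\<^sub>v (CA *\<^sub>v (Y *\<^sub>v x))" if x: "x \<in> carrier_vec n" for x
    unfolding X_def Y_def by (rule repr[OF A1 P1c P1i(1,2) Q1c M1c QM S Si(1,3) CA R SM x])
  have Bv: "B1 *\<^sub>v x = X *\<^sub>v (CB *\<^sub>v (Y *\<^sub>v x))" if x: "x \<in> carrier_vec n" for x
    unfolding X_def Y_def by (rule repr[OF B1 P1c P1i(1,2) Q1c N1c QN S Si(1,3) CB R SN x])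
  have Xinj: "u = v" if "u \<in> carrier_vec m" "v \<in> carrier_vec m" "X *\<^sub>v u = X *\<^sub>v v" for u v
    using inv_vec[OF Xc Xic XiX that(1)] inv_vec[OF Xc Xic XiX that(2)] that(3) by metis
  have dcar: "CA \<in> carrier_mat (r + sum_list (map rsz ss)) (r + sum_list (map csz ss))"
    "CB \<in> carrier_mat (r + sum_list (map rsz ss)) (r + sum_list (map csz ss))"
    using decomp_carrier[OF Dc, of ss] unfolding CA_def CB_def by auto
  have mr: "r + sum_list (map rsz ss) = m" and nr: "r + sum_list (map csz ss) = n"
    using carrier_uniq[OF dcar(1) CA] by auto
  have CBsurj: "img n CB = carrier_vec m"
  proof
    show "img n CB \<subseteq> carrier_vec m" unfolding img_def using CB by auto
    show "carrier_vec m \<subseteq> img n CB"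
    proof
      fix z :: "'a vec" assume z: "z \<in> carrier_vec m"
      have "X *\<^sub>v z \<in> carrier_vec m" using Xc z by auto
      then obtain x where x: "x \<in> carrier_vec n" and e: "X *\<^sub>v z = B1 *\<^sub>v x" using surj_B1 by auto
      have "z = CB *\<^sub>v (Y *\<^sub>v x)" using Xinj[OF z _ e[unfolded Bv[OF x]]] CB Yc x by auto
      moreover have "Y *\<^sub>v x \<in> carrier_vec n" using Yc x by auto
      ultimately show "z \<in> img n CB" unfolding img_def by auto
    qed
  qed
  have nl: "\<forall>s\<in>set ss. \<not> (\<exists>k. s = LRT k)"
    using surj_noLRT[OF Dc sz] CBsurj mr nr unfolding CB_def by auto
  have props: "\<forall>s\<in>set ss. summand_size s \<ge> 1 \<and> \<not> (\<exists>k. s = LRT k)" using sz nl by auto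
  have props': "\<forall>s\<in>set ss'. summand_size s \<ge> 1 \<and> \<not> (\<exists>k. s = LRT k)"
    using shift_props[OF props] unfolding ss'_def .
  obtain m0 n0 m' n' E F where g: "good m0 n0 m' n' (CA, CB) (CA', CB') E F"
    using good_decomp[OF Dc sz nl] unfolding CA_def CB_def CA'_def CB'_def ss'_def by auto
  have CA0: "CA \<in> carrier_mat m0 n0" and CA': "CA' \<in> carrier_mat m' n'" and CB': "CB' \<in> carrier_mat m' n'"
    and E: "E \<in> carrier_mat n0 n'" and F: "F \<in> carrier_mat m0 m'"
    and iE: "\<forall>y\<in>carrier_vec n'. E *\<^sub>v y = 0\<^sub>v n0 \<longrightarrow> y = 0\<^sub>v n'"
    and iF: "\<forall>y\<in>carrier_vec m'. F *\<^sub>v y = 0\<^sub>v m0 \<longrightarrow> y = 0\<^sub>v m'"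
    and pre: "{x \<in> carrier_vec n0. CB *\<^sub>v x \<in> img n0 CA} = img n' E"
    and im: "img n0 CA = img m' F"
    and AE: "CA * E = F * CA'" and BE: "CB * E = F * CB'"
    using g unfolding good_def by auto
  have m0: "m0 = m" and n0: "n0 = n" using carrier_uniq[OF CA0 CA] by auto
  note E = E[unfolded n0] and F = F[unfolded m0] and iE = iE[unfolded n0] and iF = iF[unfolded m0]
  note pre = pre[unfolded n0] and im = im[unfolded n0]
  define XF where "XF = X * F"
  define YE where "YE = Yi * E"
  have XFc: "XF \<in> carrier_mat m m'" unfolding XF_def using Xc F by auto
  have YEc: "YE \<in> carrier_mat n n'" unfolding YE_def using Yic E by auto
  have iXF: "\<forall>y\<in>carrier_vec m'. XF *\<^sub>v y = 0\<^sub>v m \<longrightarrow> y = 0\<^sub>v m'"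
    unfolding XF_def by (rule inj_comp[OF Xc Xic XiX F iF])
  have iYE: "\<forall>y\<in>carrier_vec n'. YE *\<^sub>v y = 0\<^sub>v n \<longrightarrow> y = 0\<^sub>v n'"
  proof -
    have "Y * Yi = 1\<^sub>m n" by (rule YYi)
    show ?thesis unfolding YE_def by (rule inj_comp[OF Yic Yc YYi E iE])
  qed
  have V2eq: "V2 = img m' XF"
  proof
    show "V2 \<subseteq> img m' XF"
    proof
      fix v assume "v \<in> V2"
      then obtain x where x: "x \<in> carrier_vec n" and v: "v = A1 *\<^sub>v x" unfolding V2_def by auto
      have "CA *\<^sub>v (Y *\<^sub>v x) \<in> img n CA" unfolding img_def using Yc x by auto
      hence "CA *\<^sub>v (Y *\<^sub>v x) \<in> img m' F" unfolding im .
      then obtain y where y: "y \<in> carrier_vec m'" and e: "CA *\<^sub>v (Y *\<^sub>v x) = F *\<^sub>v y"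
        unfolding img_def by auto
      have "v = XF *\<^sub>v y" unfolding v Av[OF x] e XF_def using Xc F y by simp
      thus "v \<in> img m' XF" unfolding img_def using y by auto
    qed
    show "img m' XF \<subseteq> V2"
    proof
      fix v assume "v \<in> img m' XF"
      then obtain y where y: "y \<in> carrier_vec m'" and v: "v = XF *\<^sub>v y" unfolding img_def by auto
      have "F *\<^sub>v y \<in> img n CA" unfolding im unfolding img_def using y by auto
      then obtain w where w: "w \<in> carrier_vec n" and e: "F *\<^sub>v y = CA *\<^sub>v w" unfolding img_def by auto
      have w': "Yi *\<^sub>v w \<in> carrier_vec n" using Yic w by auto
      have "A1 *\<^sub>v (Yi *\<^sub>v w) = X *\<^sub>v (CA *\<^sub>v w)"
        unfolding Av[OF w'] using inv_vec[OF Yic Yc YYi w] by simp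
      also have "\<dots> = v" unfolding v XF_def e[symmetric] using Xc F y by simp
      finally show "v \<in> V2" unfolding V2_def using w' by force
    qed
  qed
  have bV2: "basis_mat m XF V2" unfolding basis_mat_def V2eq img_def using XFc iXF by auto
  have U2eq: "U2 = img n' YE"
  proof
    show "U2 \<subseteq> img n' YE"
    proof
      fix x assume "x \<in> U2"
      hence x: "x \<in> carrier_vec n" and "B1 *\<^sub>v x \<in> V2" unfolding U2_def by auto
      then obtain w where w: "w \<in> carrier_vec n" and e: "B1 *\<^sub>v x = A1 *\<^sub>v w" unfolding V2_def by auto
      have "X *\<^sub>v (CB *\<^sub>v (Y *\<^sub>v x)) = X *\<^sub>v (CA *\<^sub>v (Y *\<^sub>v w))" using e Av[OF w] Bv[OF x] by simp
      hence "CB *\<^sub>v (Y *\<^sub>v x) = CA *\<^sub>v (Y *\<^sub>v w)" using Xinj CA CB Yc x w by auto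
      moreover have Yx: "Y *\<^sub>v x \<in> carrier_vec n" "Y *\<^sub>v w \<in> carrier_vec n" using Yc x w by auto
      ultimately have "Y *\<^sub>v x \<in> {x \<in> carrier_vec n. CB *\<^sub>v x \<in> img n CA}" unfolding img_def by auto
      hence "Y *\<^sub>v x \<in> img n' E" unfolding pre .
      then obtain y where y: "y \<in> carrier_vec n'" and ey: "Y *\<^sub>v x = E *\<^sub>v y" unfolding img_def by auto
      have "x = Yi *\<^sub>v (Y *\<^sub>v x)" using inv_vec[OF Yc Yic YiY x] by simp
      also have "\<dots> = YE *\<^sub>v y" unfolding ey YE_def using Yic E y by simp
      finally show "x \<in> img n' YE" unfolding img_def using y by auto
    qed
    show "img n' YE \<subseteq> U2"
    proof
      fix x assume "x \<in> img n' YE"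
      then obtain y where y: "y \<in> carrier_vec n'" and x: "x = YE *\<^sub>v y" unfolding img_def by auto
      have Ey: "E *\<^sub>v y \<in> carrier_vec n" using E y by auto
      have xc: "x \<in> carrier_vec n" using x YEc y by auto
      have Yx: "Y *\<^sub>v x = E *\<^sub>v y" unfolding x YE_def using inv_vec[OF Yic Yc YYi Ey] Yic E y by simp
      have "E *\<^sub>v y \<in> img n' E" unfolding img_def using y by auto
      hence "CB *\<^sub>v (E *\<^sub>v y) \<in> img n CA" unfolding pre[symmetric] by auto
      then obtain w where w: "w \<in> carrier_vec n" and e: "CB *\<^sub>v (E *\<^sub>v y) = CA *\<^sub>v w" unfolding img_def by auto
      have w': "Yi *\<^sub>v w \<in> carrier_vec n" using Yic w by auto
      have "B1 *\<^sub>v x = X *\<^sub>v (CA *\<^sub>v w)" unfolding Bv[OF xc] Yx e ..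
      also have "\<dots> = A1 *\<^sub>v (Yi *\<^sub>v w)" unfolding Av[OF w'] using inv_vec[OF Yic Yc YYi w] by simp
      finally have "B1 *\<^sub>v x \<in> V2" unfolding V2_def using w' by auto
      thus "x \<in> U2" unfolding U2_def using xc by auto
    qed
  qed
  have bU2: "basis_mat n YE U2" unfolding basis_mat_def U2eq img_def using YEc iYE by auto
  have AYE: "A1 * YE = XF * CA'"
  proof (rule mat_eq_by_vec[of _ m n'])
    show "A1 * YE \<in> carrier_mat m n'" using A1 YEc by auto
    show "XF * CA' \<in> carrier_mat m n'" using XFc CA' by auto
    fix y :: "'a vec" assume y: "y \<in> carrier_vec n'"
    have Ey: "E *\<^sub>v y \<in> carrier_vec n" using E y by auto
    have YEy: "YE *\<^sub>v y \<in> carrier_vec n" using YEc y by auto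
    have "(A1 * YE) *\<^sub>v y = A1 *\<^sub>v (YE *\<^sub>v y)" using A1 YEc y by simp
    also have "\<dots> = X *\<^sub>v (CA *\<^sub>v (E *\<^sub>v y))" unfolding Av[OF YEy] unfolding YE_def
      using inv_vec[OF Yic Yc YYi Ey] Yic E y by simp
    also have "CA *\<^sub>v (E *\<^sub>v y) = F *\<^sub>v (CA' *\<^sub>v y)"
      using AE CA E F CA' y by (metis assoc_mult_mat_vec)
    also have "X *\<^sub>v (F *\<^sub>v (CA' *\<^sub>v y)) = XF *\<^sub>v (CA' *\<^sub>v y)" unfolding XF_def using Xc F CA' y by simp
    also have "\<dots> = (XF * CA') *\<^sub>v y" using XFc CA' y by simp
    finally show "(A1 * YE) *\<^sub>v y = (XF * CA') *\<^sub>v y" .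
  qed
  have BYE: "B1 * YE = XF * CB'"
  proof (rule mat_eq_by_vec[of _ m n'])
    show "B1 * YE \<in> carrier_mat m n'" using B1 YEc by auto
    show "XF * CB' \<in> carrier_mat m n'" using XFc CB' by auto
    fix y :: "'a vec" assume y: "y \<in> carrier_vec n'"
    have Ey: "E *\<^sub>v y \<in> carrier_vec n" using E y by auto
    have YEy: "YE *\<^sub>v y \<in> carrier_vec n" using YEc y by auto
    have "(B1 * YE) *\<^sub>v y = B1 *\<^sub>v (YE *\<^sub>v y)" using B1 YEc y by simp
    also have "\<dots> = X *\<^sub>v (CB *\<^sub>v (E *\<^sub>v y))" unfolding Bv[OF YEy] unfolding YE_def
      using inv_vec[OF Yic Yc YYi Ey] Yic E y by simp
    also have "CB *\<^sub>v (E *\<^sub>v y) = F *\<^sub>v (CB' *\<^sub>v y)"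
      using BE CB E F CB' y by (metis assoc_mult_mat_vec)
    also have "X *\<^sub>v (F *\<^sub>v (CB' *\<^sub>v y)) = XF *\<^sub>v (CB' *\<^sub>v y)" unfolding XF_def using Xc F CB' y by simp
    also have "\<dots> = (XF * CB') *\<^sub>v y" using XFc CB' y by simp
    finally show "(B1 * YE) *\<^sub>v y = (XF * CB') *\<^sub>v y" .
  qed
  from basis_change[OF P2 bU2] obtain T where T: "T \<in> carrier_mat n' (dim_col P2)" "invertible_mat T"
    "P2 = YE * T" using YEc by auto
  from basis_change[OF Q2 bV2] obtain W where W: "W \<in> carrier_mat m' (dim_col Q2)" "invertible_mat W"
    "Q2 = XF * W" using XFc by auto
  have "square_mat T" "square_mat W" using T(2) W(2) unfolding invertible_mat_def by auto
  hence Tc: "T \<in> carrier_mat n' n'" and Wc: "W \<in> carrier_mat m' m'" using T(1) W(1) by auto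
  have dP2: "dim_col P2 = n'" and dQ2: "dim_col Q2 = m'" using T(1) W(1) Tc Wc by auto
  have M2c: "M2 \<in> carrier_mat m' n'" and QM2: "Q2 * M2 = A1 * P2" using M2 dP2 dQ2 unfolding mat_wrt_def by auto
  have N2c: "N2 \<in> carrier_mat m' n'" and QN2: "Q2 * N2 = B1 * P2" using N2 dP2 dQ2 unfolding mat_wrt_def by auto
  have XFd: "dim_col XF = m'" using XFc by auto
  have keyA: "W * M2 = CA' * T"
  proof (rule basis_cancel[OF bV2])
    show "W * M2 \<in> carrier_mat (dim_col XF) n'" using Wc M2c XFd by auto
    show "CA' * T \<in> carrier_mat (dim_col XF) n'" using CA' Tc XFd by auto
    have "XF * (W * M2) = Q2 * M2" unfolding W(3) using XFc Wc M2c by (simp add: assoc_mult_mat)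
    also have "\<dots> = A1 * (YE * T)" unfolding QM2 T(3) ..
    also have "\<dots> = (A1 * YE) * T" using A1 YEc Tc by (simp add: assoc_mult_mat)
    also have "\<dots> = XF * (CA' * T)" unfolding AYE using XFc CA' Tc by (simp add: assoc_mult_mat)
    finally show "XF * (W * M2) = XF * (CA' * T)" .
  qed
  have keyB: "W * N2 = CB' * T"
  proof (rule basis_cancel[OF bV2])
    show "W * N2 \<in> carrier_mat (dim_col XF) n'" using Wc N2c XFd by auto
    show "CB' * T \<in> carrier_mat (dim_col XF) n'" using CB' Tc XFd by auto
    have "XF * (W * N2) = Q2 * N2" unfolding W(3) using XFc Wc N2c by (simp add: assoc_mult_mat)
    also have "\<dots> = B1 * (YE * T)" unfolding QN2 T(3) ..
    also have "\<dots> = (B1 * YE) * T" using B1 YEc Tc by (simp add: assoc_mult_mat)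
    also have "\<dots> = XF * (CB' * T)" unfolding BYE using XFc CB' Tc by (simp add: assoc_mult_mat)
    finally show "XF * (W * N2) = XF * (CB' * T)" .
  qed
  have part1: "regularizing_decomp M2 N2 D (shift_decomp ss)"
  proof -
    have pe2: "pair_equiv (M2, N2) (CA', CB')"
      unfolding pair_equiv_def Let_def fst_conv snd_conv
      using M2c N2c CA' CB' Wc Tc W(2) T(2) keyA keyB by auto
    have s2: "\<forall>s\<in>set (shift_decomp ss). summand_size s \<ge> 1" using props' unfolding ss'_def by auto
    have dp: "decomp_pair D (shift_decomp ss) = (CA', CB')" unfolding CA'_def CB'_def ss'_def by simp
    have Dc': "D \<in> carrier_mat (dim_row D) (dim_row D)" using Dc unfolding r_def .
    show ?thesis unfolding regularizing_decomp_def dp using Dc' Dinv s2 pe2 by blast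
  qed
  have dimV2: "subspace_dim m V2 = m'" using basis_mat_dim[OF bV2] XFd by simp
  have sz': "\<forall>s\<in>set ss'. summand_size s \<ge> 1" and nl': "\<forall>s\<in>set ss'. \<not> (\<exists>k. s = LRT k)" using props' by auto
  define CA'' where "CA'' = fst (decomp_pair D (shift_decomp ss'))"
  obtain m1 n1 m'' n'' E' F' where g': "good m1 n1 m'' n'' (CA', CB') (CA'', snd (decomp_pair D (shift_decomp ss'))) E' F'"
    using good_decomp[OF Dc sz' nl'] unfolding CA'_def CB'_def CA''_def by auto
  have CA1: "CA' \<in> carrier_mat m1 n1" and CA'': "CA'' \<in> carrier_mat m'' n''"
    and F': "F' \<in> carrier_mat m1 m''"
    and iF': "\<forall>y\<in>carrier_vec m''. F' *\<^sub>v y = 0\<^sub>v m1 \<longrightarrow> y = 0\<^sub>v m''"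
    and im': "img n1 CA' = img m'' F'"
    using g' unfolding good_def by auto
  have m1: "m1 = m'" and n1: "n1 = n'" using carrier_uniq[OF CA1 CA'] by auto
  note F' = F'[unfolded m1] and iF' = iF'[unfolded m1] and im' = im'[unfolded n1]
  define XFF where "XFF = XF * F'"
  have XFFc: "XFF \<in> carrier_mat m m''" unfolding XFF_def using XFc F' by auto
  have iXFF: "\<forall>y\<in>carrier_vec m''. XFF *\<^sub>v y = 0\<^sub>v m \<longrightarrow> y = 0\<^sub>v m''"
    unfolding XFF_def by (rule inj_comp2[OF XFc iXF F' iF'])
  have V3eq: "V3 = img m'' XFF"
  proof -
    have "V3 = (\<lambda>y. A1 *\<^sub>v (YE *\<^sub>v y)) ` carrier_vec n'" unfolding V3_def U2eq img_def by auto
    also have "\<dots> = (\<lambda>y. XF *\<^sub>v (CA' *\<^sub>v y)) ` carrier_vec n'"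
    proof (rule image_cong[OF refl])
      fix y :: "'a vec" assume y: "y \<in> carrier_vec n'"
      have "A1 *\<^sub>v (YE *\<^sub>v y) = (A1 * YE) *\<^sub>v y" using A1 YEc y by simp
      also have "\<dots> = XF *\<^sub>v (CA' *\<^sub>v y)" unfolding AYE using XFc CA' y by simp
      finally show "A1 *\<^sub>v (YE *\<^sub>v y) = XF *\<^sub>v (CA' *\<^sub>v y)" .
    qed
    also have "\<dots> = (\<lambda>v. XF *\<^sub>v v) ` img n' CA'" unfolding img_def by auto
    also have "\<dots> = (\<lambda>v. XF *\<^sub>v v) ` img m'' F'" unfolding im' ..
    also have "\<dots> = img m'' XFF" unfolding img_def XFF_def image_image using XFc F' by auto
    finally show ?thesis .
  qed
  have bV3: "basis_mat m XFF V3" unfolding basis_mat_def V3eq img_def using XFFc iXFF by auto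
  have dimV3: "subspace_dim m V3 = m''" using basis_mat_dim[OF bV3] XFFc by simp
  have dcar': "CA' \<in> carrier_mat (r + sum_list (map rsz ss')) (r + sum_list (map csz ss'))"
    using decomp_carrier[OF Dc, of ss'] unfolding CA'_def by auto
  have dcar'': "CA'' \<in> carrier_mat (r + sum_list (map rsz (shift_decomp ss'))) (r + sum_list (map csz (shift_decomp ss')))"
    using decomp_carrier[OF Dc, of "shift_decomp ss'"] unfolding CA''_def by auto
  have mr': "r + sum_list (map rsz ss') = m'" using carrier_uniq[OF dcar' CA'] by auto
  have mr'': "r + sum_list (map rsz (shift_decomp ss')) = m''" using carrier_uniq[OF dcar'' CA''] by auto
  have part2: "int (count_list ss (JI 1)) = int m - 2 * int (subspace_dim m V2) + int (subspace_dim m V3)"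
    unfolding dimV2 dimV3 count_formula[of ss] using mr mr' mr'' unfolding ss'_def by linarith
  show ?thesis using part1 part2 by auto
qed


end
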